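(* Let $n,m$ be positive integers and $\mathbf a,\mathbf b\in\mathbb N^n$. Then the $m$th Pitman--Stanley polytope $\mathrm{PS}_n^m(\mathbf a,\mathbf b)$ is integrally equivalent to the flow polytope $\mathcal F_{G(n,m)}(\mathbf a,\mathbf b)$.
   Context: For $\mathbf a,\mathbf b\in\mathbb N^n$, $\mathrm{PS}_n^m(\mathbf a,\mathbf b)$ is the set of real matrices $(x_{ij})_{1\le i\le n,\,1\le j\le m}$ with nonnegative entries such that for every $i=1,\dots,n$: $$b_1+\cdots+b_i\le \sum_{k=1}^i x_{km}\le \sum_{k=1}^i x_{k,m-1}\le\cdots\le \sum_{k=1}^i x_{k1}\le a_1+\cdots+a_i .$$ $G(n,m)$ is the directed graph with vertex set $\{(i,j):1\le i\le n,\ 0\le j\le m\}\cup\{s\}$ and edges $((i,j),(i,j+1))$ for $1\le i\le n$, $0\le j\le m-1$; $((i,j),(i+1,j))$ for $1\le i\le n-1$, $0\le j\le m$; and $((n,j),s)$ for $0\le j\le m$. The flow polytope $\mathcal F_{G(n,m)}(\mathbf a,\mathbf b)\subset\mathbb R^{E(G(n,m))}$ is the set of assignments $f:E\to\mathbb R_{\ge0}$ such that at every vertex $v$, (total flow on edges leaving $v$) $-$ (total flow on edges entering $v$) equals the netflow of $v$, where vertex $(i,0)$ has netflow $a_i$, vertex $(i,m)$ has netflow $-b_i$, the sink $s$ has netflow $-\sum_i a_i+\sum_i b_i$, and all other vertices have netflow $0$. Two lattice polytopes $P\subset\mathbb R^p$, $Q\subset\mathbb R^q$ are integrally equivalent if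 there is an affine map $\Phi:\mathbb R^p\to\mathbb R^q$ restricting to a bijection $P\to Q$ that preserves the lattice (i.e. induces a bijection between the integer points of the affine spans of $P$ and $Q$). *)

theory Defs
  imports Complex_Main
begin

text \<open>Points of R^I (I a finite index set) are represented by functions
  'i => real that vanish outside I.\<close>

definition aff_hull :: "('i \<Rightarrow> real) set \<Rightarrow> ('i \<Rightarrow> real) set" where
  "aff_hull P = {x. \<exists>S u. finite S \<and> S \<noteq> {} \<and> S \<subseteq> P \<and> sum u S = 1 \<and>
                       x = (\<lambda>k. \<Sum>y\<in>S. u y * y k)}"

definition int_points :: "'i set \<Rightarrow> ('i \<Rightarrow> real) set" where
  "int_points I = {x. \<forall>k\<in>I. x k \<in> \<int>}"

definition affine_map_on ::
  "'i set \<Rightarrow> 'j set \<Rightarrow> ('j \<Rightarrow> 'i \<Rightarrow> real) \<Rightarrow> ('j \<Rightarrow> real) \<Rightarrow> ('i \<Rightarrow> real) \<Rightarrow> ('j \<Rightarrow> real)" where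
  "affine_map_on I J M c = (\<lambda>x j. if j \<in> J then c j + (\<Sum>i\<in>I. M j i * x i) else 0)"

definition integrally_equivalent ::
  "'i set \<Rightarrow> ('i \<Rightarrow> real) set \<Rightarrow> 'j set \<Rightarrow> ('j \<Rightarrow> real) set \<Rightarrow> bool" where
  "integrally_equivalent I P J Q \<longleftrightarrow>
     (\<exists>M c. bij_betw (affine_map_on I J M c) P Q \<and>
            bij_betw (affine_map_on I J M c) (aff_hull P \<inter> int_points I)
                                              (aff_hull Q \<inter> int_points J))"

definition PS_index :: "nat \<Rightarrow> nat \<Rightarrow> (nat \<times> nat) set" where
  "PS_index n m = {1..n} \<times> {1..m}"

definition PS :: "nat \<Rightarrow> nat \<Rightarrow> (nat \<Rightarrow> nat) \<Rightarrow> (nat \<Rightarrow> nat) \<Rightarrow> (nat \<times> nat \<Rightarrow> real) set" where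
  "PS n m a b = {x. (\<forall>k. k \<notin> PS_index n m \<longrightarrow> x k = 0) \<and>
      (\<forall>k\<in>PS_index n m. 0 \<le> x k) \<and>
      (\<forall>i\<in>{1..n}.
         real (\<Sum>k=1..i. b k) \<le> (\<Sum>k=1..i. x (k, m)) \<and>
         (\<forall>j\<in>{1..<m}. (\<Sum>k=1..i. x (k, j+1)) \<le> (\<Sum>k=1..i. x (k, j))) \<and>
         (\<Sum>k=1..i. x (k, 1)) \<le> real (\<Sum>k=1..i. a k))}"

datatype vertex = V nat nat | Sink

definition G_vertices :: "nat \<Rightarrow> nat \<Rightarrow> vertex set" where
  "G_vertices n m = {V i j | i j. 1 \<le> i \<and> i \<le> n \<and> j \<le> m} \<union> {Sink}"

definition G_edges :: "nat \<Rightarrow> nat \<Rightarrow> (vertex \<times> vertex) set" where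
  "G_edges n m =
     {(V i j, V i (j+1)) | i j. 1 \<le> i \<and> i \<le> n \<and> j + 1 \<le> m} \<union>
     {(V i j, V (i+1) j) | i j. 1 \<le> i \<and> i + 1 \<le> n \<and> j \<le> m} \<union>
     {(V n j, Sink) | j. j \<le> m}"

definition netflow :: "nat \<Rightarrow> nat \<Rightarrow> (nat \<Rightarrow> nat) \<Rightarrow> (nat \<Rightarrow> nat) \<Rightarrow> vertex \<Rightarrow> real" where
  "netflow n m a b v = (case v of
      Sink \<Rightarrow> - real (\<Sum>i=1..n. a i) + real (\<Sum>i=1..n. b i)
    | V i j \<Rightarrow> (if j = 0 then real (a i) else if j = m then - real (b i) else 0))"

definition flow_polytope ::
  "nat \<Rightarrow> nat \<Rightarrow> (nat \<Rightarrow> nat) \<Rightarrow> (nat \<Rightarrow> nat) \<Rightarrow> (vertex \<times> vertex \<Rightarrow> real) set" where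
  "flow_polytope n m a b = {f. (\<forall>e. e \<notin> G_edges n m \<longrightarrow> f e = 0) \<and>
      (\<forall>e\<in>G_edges n m. 0 \<le> f e) \<and>
      (\<forall>v\<in>G_vertices n m.
         (\<Sum>e\<in>{e\<in>G_edges n m. fst e = v}. f e) - (\<Sum>e\<in>{e\<in>G_edges n m. snd e = v}. f e)
           = netflow n m a b v)}"

end

theory Submission
  imports Defs
begin

definition down :: "nat \<Rightarrow> nat \<Rightarrow> nat \<Rightarrow> vertex \<times> vertex" where
 "down n i j = (if i < n then (V i j, V (Suc i) j) else (V n j, Sink))"

fun vrow :: "vertex \<Rightarrow> nat" where "vrow (V i j) = i" | "vrow Sink = 0"
fun vcol :: "vertex \<Rightarrow> nat" where "vcol (V i j) = j" | "vcol Sink = 0"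

lemma vrow_down[simp]: "i \<le> n \<Longrightarrow> vrow (fst (down n i j)) = i"
  unfolding down_def by auto
lemma vcol_down[simp]: "vcol (fst (down n i j)) = j"
  unfolding down_def by auto
lemma snd_down[simp]: "snd (down n i j) \<noteq> V i (Suc j)"
  unfolding down_def by auto

lemma edge_cases:
  assumes "e \<in> G_edges n m" "0 < n"
  obtains i j where "1 \<le> i" "i \<le> n" "Suc j \<le> m" "e = (V i j, V i (Suc j))"
  | i j where "1 \<le> i" "i \<le> n" "j \<le> m" "e = down n i j"
proof -
  consider (h) i j where "1 \<le> i" "i \<le> n" "j + 1 \<le> m" "e = (V i j, V i (j+1))"
    | (v) i j where "1 \<le> i" "i + 1 \<le> n" "j \<le> m" "e = (V i j, V (i+1) j)"
    | (s) j where "j \<le> m" "e = (V n j, Sink)"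
    using assms unfolding G_edges_def by blast
  then show ?thesis
  proof cases
    case h then show ?thesis using that(1) by simp
  next
    case v then show ?thesis using that(2)[of i j] unfolding down_def by simp
  next
    case s
    then show ?thesis using that(2)[of n j] assms(2) unfolding down_def by simp
  qed
qed

lemma hor_in: "1 \<le> i \<Longrightarrow> i \<le> n \<Longrightarrow> Suc j \<le> m \<Longrightarrow> (V i j, V i (Suc j)) \<in> G_edges n m"
  unfolding G_edges_def by auto

lemma down_in: "1 \<le> i \<Longrightarrow> i \<le> n \<Longrightarrow> j \<le> m \<Longrightarrow> down n i j \<in> G_edges n m"
  unfolding G_edges_def down_def by auto

lemma finite_edges: "finite (G_edges n m)"
proof -
  have "G_edges n m \<subseteq> ((\<lambda>(i,j). V i j) ` ({0..n} \<times> {0..m}) \<union> {Sink}) \<times> ((\<lambda>(i,j). V i j) ` ({0..n} \<times> {0..m}) \<union> {Sink})"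
    unfolding G_edges_def by force
  then show ?thesis by (rule finite_subset) auto
qed

lemma out_sum:
  assumes "1 \<le> i" "i \<le> n" "j \<le> m"
  shows "(\<Sum>e\<in>{e\<in>G_edges n m. fst e = V i j}. f e) =
     (if Suc j \<le> m then f (V i j, V i (Suc j)) else 0) + f (down n i j)"
proof -
  have "{e\<in>G_edges n m. fst e = V i j} = (if Suc j \<le> m then {(V i j, V i (Suc j))} else {}) \<union> {down n i j}"
    using assms unfolding G_edges_def down_def by auto
  moreover have "(V i j, V i (Suc j)) \<noteq> down n i j" unfolding down_def by auto
  ultimately show ?thesis by (auto simp: add.commute)
qed

lemma in_sum:
  assumes "1 \<le> i" "i \<le> n" "j \<le> m"
  shows "(\<Sum>e\<in>{e\<in>G_edges n m. snd e = V i j}. f e) =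
     (if 1 \<le> j then f (V i (j-1), V i j) else 0) + (if 2 \<le> i then f (down n (i-1) j) else 0)"
proof -
  have "{e\<in>G_edges n m. snd e = V i j} = (if 1 \<le> j then {(V i (j-1), V i j)} else {}) \<union> (if 2 \<le> i then {down n (i-1) j} else {})"
    using assms unfolding G_edges_def down_def by (auto split: if_splits)
  moreover have "2 \<le> i \<Longrightarrow> (V i (j-1), V i j) \<noteq> down n (i-1) j" unfolding down_def by auto
  ultimately show ?thesis by (auto simp: add.commute)
qed

lemma sink_out: "{e\<in>G_edges n m. fst e = Sink} = {}"
  unfolding G_edges_def by auto

lemma sink_in: "{e\<in>G_edges n m. snd e = Sink} = (\<lambda>j. (V n j, Sink)) ` {0..m}"
  unfolding G_edges_def by auto

definition Mm :: "vertex \<times> vertex \<Rightarrow> nat \<times> nat \<Rightarrow> real" where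
"Mm e kl = (if snd e = V (vrow (fst e)) (Suc (vcol (fst e)))
   then (if kl = (vrow (fst e), Suc (vcol (fst e))) then 1 else 0)
   else (if fst kl \<le> vrow (fst e) then (if snd kl = vcol (fst e) then 1 else 0) - (if snd kl = Suc (vcol (fst e)) then 1 else 0) else 0))"

definition cv :: "nat \<Rightarrow> (nat\<Rightarrow>nat) \<Rightarrow> (nat\<Rightarrow>nat) \<Rightarrow> vertex \<times> vertex \<Rightarrow> real" where
"cv m a b e = (if snd e = V (vrow (fst e)) (Suc (vcol (fst e))) then 0
   else (if vcol (fst e) = 0 then real (\<Sum>k=1..vrow (fst e). a k) else 0)
      - (if vcol (fst e) = m then real (\<Sum>k=1..vrow (fst e). b k) else 0))"

definition Phi where "Phi n m a b = affine_map_on (PS_index n m) (G_edges n m) Mm (cv m a b)"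

definition ext :: "nat \<Rightarrow> (nat\<Rightarrow>nat) \<Rightarrow> (nat\<Rightarrow>nat) \<Rightarrow> (nat\<times>nat\<Rightarrow>real) \<Rightarrow> nat \<Rightarrow> nat \<Rightarrow> real" where
 "ext m a b x i j = (if j = 0 then real (a i) else if j = Suc m then real (b i) else x (i,j))"

definition Cs where "Cs m a b x i j = (\<Sum>k=1..i. ext m a b x k j)"

lemma Phi_hor:
  assumes "1 \<le> i" "i \<le> n" "Suc j \<le> m"
  shows "Phi n m a b x (V i j, V i (Suc j)) = x (i, Suc j)"
proof -
  have "(i, Suc j) \<in> PS_index n m" using assms unfolding PS_index_def by auto
  moreover have "(\<Sum>kl\<in>PS_index n m. Mm (V i j, V i (Suc j)) kl * x kl) = (\<Sum>kl\<in>PS_index n m. if kl = (i, Suc j) then x kl else 0)"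
    unfolding Mm_def by (intro sum.cong) auto
  moreover have "finite (PS_index n m)" unfolding PS_index_def by auto
  ultimately show ?thesis using hor_in[OF assms]
    unfolding Phi_def affine_map_on_def cv_def by simp
qed

lemma sum_PS_index:
  "(\<Sum>kl\<in>PS_index n m. g kl) = (\<Sum>k=1..n. \<Sum>l=1..m. g (k,l))"
  unfolding PS_index_def by (simp add: sum.cartesian_product)

lemma Phi_down:
  assumes "1 \<le> i" "i \<le> n" "j \<le> m" "0 < m"
  shows "Phi n m a b x (down n i j) = Cs m a b x i j - Cs m a b x i (Suc j)"
proof -
  have nh: "snd (down n i j) \<noteq> V (vrow (fst (down n i j))) (Suc (vcol (fst (down n i j))))"
    and fr: "vrow (fst (down n i j)) = i" "vcol (fst (down n i j)) = j"
    unfolding down_def using assms by auto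
  have inner: "(\<Sum>l=1..m. ((if l = j then 1 else 0) - (if l = Suc j then 1 else 0)) * x (k,l))
      = (ext m a b x k j - ext m a b x k (Suc j)) - ((if j = 0 then real (a k) else 0) - (if j = m then real (b k) else 0))" for k
  proof -
    have h1: "(\<Sum>l=1..m. (if l = j then 1 else 0) * x (k,l)) = (if 1 \<le> j then x (k,j) else 0)"
    proof -
      have "(\<Sum>l=1..m. (if l = j then 1 else 0) * x (k,l)) = (\<Sum>l=1..m. if l = j then x (k,j) else 0)"
        by (rule sum.cong) auto
      then show ?thesis using assms by (simp add: sum.delta')
    qed
    have h2: "(\<Sum>l=1..m. (if l = Suc j then 1 else 0) * x (k,l)) = (if Suc j \<le> m then x (k,Suc j) else 0)"
    proof -
      have "(\<Sum>l=1..m. (if l = Suc j then 1 else 0) * x (k,l)) = (\<Sum>l=1..m. if l = Suc j then x (k,Suc j) else 0)"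
        by (rule sum.cong) auto
      then show ?thesis using assms by (simp add: sum.delta')
    qed
    have "(\<Sum>l=1..m. ((if l = j then 1 else 0) - (if l = Suc j then 1 else 0)) * x (k,l))
       = (if 1 \<le> j then x (k,j) else 0) - (if Suc j \<le> m then x (k, Suc j) else 0)"
      unfolding h1[symmetric] h2[symmetric] by (simp add: left_diff_distrib sum_subtractf)
    then show ?thesis using assms unfolding ext_def by auto
  qed
  have "Phi n m a b x (down n i j) = cv m a b (down n i j) +
      (\<Sum>k=1..n. \<Sum>l=1..m. Mm (down n i j) (k,l) * x (k,l))"
    using down_in[OF assms(1-3)] unfolding Phi_def affine_map_on_def sum_PS_index by simp
  also have "(\<Sum>k=1..n. \<Sum>l=1..m. Mm (down n i j) (k,l) * x (k,l))
     = (\<Sum>k=1..n. if k \<le> i then (ext m a b x k j - ext m a b x k (Suc j)) - ((if j = 0 then real (a k) else 0) - (if j = m then real (b k) else 0)) else 0)"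
    unfolding Mm_def using nh fr by (intro sum.cong refl) (simp add: inner[symmetric])
  also have "\<dots> = (\<Sum>k\<in>{k\<in>{1..n}. k \<le> i}. (ext m a b x k j - ext m a b x k (Suc j)) - ((if j = 0 then real (a k) else 0) - (if j = m then real (b k) else 0)))"
    by (rule sum.inter_filter[symmetric]) simp
  also have "{k\<in>{1..n}. k \<le> i} = {1..i}" using assms by auto
  also have "cv m a b (down n i j) = (if j = 0 then real (\<Sum>k=1..i. a k) else 0) - (if j = m then real (\<Sum>k=1..i. b k) else 0)"
    unfolding cv_def using assms by simp
  finally show ?thesis
    unfolding Cs_def 
    by (simp add: sum_subtractf of_nat_sum)
qed

lemma Cs_0[simp]: "Cs m a b x 0 j = 0" unfolding Cs_def by simp
lemma Cs_Suc: "Cs m a b x (Suc i) j = Cs m a b x i j + ext m a b x (Suc i) j"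
  unfolding Cs_def by simp

lemma Phi_cons_V:
  assumes "0 < m" "1 \<le> i" "i \<le> n" "j \<le> m"
  shows "(\<Sum>e\<in>{e\<in>G_edges n m. fst e = V i j}. Phi n m a b x e) - (\<Sum>e\<in>{e\<in>G_edges n m. snd e = V i j}. Phi n m a b x e)
     = netflow n m a b (V i j)"
proof -
  obtain i' where i': "i = Suc i'" using assms by (cases i) auto
  have o: "(\<Sum>e\<in>{e\<in>G_edges n m. fst e = V i j}. Phi n m a b x e) =
     (if Suc j \<le> m then x (i, Suc j) else 0) + (Cs m a b x i j - Cs m a b x i (Suc j))"
    using assms by (simp add: out_sum Phi_hor Phi_down)
  have h: "1 \<le> j \<Longrightarrow> Phi n m a b x (V i (j-1), V i j) = x (i, j)"
    using Phi_hor[of i n "j-1" m a b x] assms by simp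
  have d: "2 \<le> i \<Longrightarrow> Phi n m a b x (down n (i-1) j) = Cs m a b x (i-1) j - Cs m a b x (i-1) (Suc j)"
    using Phi_down[of "i-1" n j m a b x] assms by simp
  have inn: "(\<Sum>e\<in>{e\<in>G_edges n m. snd e = V i j}. Phi n m a b x e) =
     (if 1 \<le> j then x (i, j) else 0) + (Cs m a b x i' j - Cs m a b x i' (Suc j))"
    using assms h d i' by (cases i') (auto simp: in_sum)
  show ?thesis unfolding o inn using assms unfolding i' Cs_Suc netflow_def ext_def
    by auto
qed

lemma Phi_cons_Sink:
  assumes "0 < m" "0 < n"
  shows "(\<Sum>e\<in>{e\<in>G_edges n m. fst e = Sink}. Phi n m a b x e) - (\<Sum>e\<in>{e\<in>G_edges n m. snd e = Sink}. Phi n m a b x e)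
     = netflow n m a b Sink"
proof -
  have "(\<Sum>e\<in>{e\<in>G_edges n m. snd e = Sink}. Phi n m a b x e) = (\<Sum>j=0..m. Phi n m a b x (V n j, Sink))"
    unfolding sink_in by (subst sum.reindex) (auto simp: inj_on_def)
  also have "\<dots> = (\<Sum>j=0..m. Cs m a b x n j - Cs m a b x n (Suc j))"
  proof (rule sum.cong)
    fix j assume "j \<in> {0..m}"
    then show "Phi n m a b x (V n j, Sink) = Cs m a b x n j - Cs m a b x n (Suc j)"
      using Phi_down[of n n j m a b x] assms unfolding down_def by simp
  qed simp
  also have "\<dots> = Cs m a b x n 0 - Cs m a b x n (Suc m)"
    using sum_Suc_diff[of 0 m "\<lambda>j. - Cs m a b x n j"] by simp
  also have "\<dots> = real (\<Sum>i=1..n. a i) - real (\<Sum>i=1..n. b i)"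
    unfolding Cs_def ext_def by (simp add: of_nat_sum)
  finally show ?thesis unfolding sink_out netflow_def by simp
qed

lemma Cs_zero: "Cs m a b x i 0 = real (\<Sum>k=1..i. a k)"
  unfolding Cs_def ext_def by (simp add: of_nat_sum)
lemma Cs_last: "Cs m a b x i (Suc m) = real (\<Sum>k=1..i. b k)"
  unfolding Cs_def ext_def by (simp add: of_nat_sum)
lemma Cs_mid: "1 \<le> j \<Longrightarrow> j \<le> m \<Longrightarrow> Cs m a b x i j = (\<Sum>k=1..i. x (k, j))"
  unfolding Cs_def ext_def by simp

lemma PS_iff:
  assumes "0 < m"
  shows "x \<in> PS n m a b \<longleftrightarrow> (\<forall>k. k \<notin> PS_index n m \<longrightarrow> x k = 0) \<and> (\<forall>k\<in>PS_index n m. 0 \<le> x k) \<and>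
     (\<forall>i\<in>{1..n}. \<forall>j\<le>m. Cs m a b x i (Suc j) \<le> Cs m a b x i j)"
proof -
  have "(real (\<Sum>k=1..i. b k) \<le> (\<Sum>k=1..i. x (k, m)) \<and>
         (\<forall>j\<in>{1..<m}. (\<Sum>k=1..i. x (k, j+1)) \<le> (\<Sum>k=1..i. x (k, j))) \<and>
         (\<Sum>k=1..i. x (k, 1)) \<le> real (\<Sum>k=1..i. a k))
     \<longleftrightarrow> (\<forall>j\<le>m. Cs m a b x i (Suc j) \<le> Cs m a b x i j)" for i
  proof
    assume H: "real (\<Sum>k=1..i. b k) \<le> (\<Sum>k=1..i. x (k, m)) \<and>
         (\<forall>j\<in>{1..<m}. (\<Sum>k=1..i. x (k, j+1)) \<le> (\<Sum>k=1..i. x (k, j))) \<and>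
         (\<Sum>k=1..i. x (k, 1)) \<le> real (\<Sum>k=1..i. a k)"
    show "\<forall>j\<le>m. Cs m a b x i (Suc j) \<le> Cs m a b x i j"
    proof (intro allI impI)
      fix j assume "j \<le> m"
      then consider "j = 0" | "j = m" "j \<noteq> 0" | "1 \<le> j" "j < m" by linarith
      then show "Cs m a b x i (Suc j) \<le> Cs m a b x i j"
      proof cases
        case 1 then show ?thesis using H assms by (simp add: Cs_zero Cs_mid)
      next
        case 2 then show ?thesis using H assms by (simp add: Cs_last Cs_mid)
      next
        case 3 then show ?thesis using H assms by (simp add: Cs_mid)
      qed
    qed
  next
    assume H: "\<forall>j\<le>m. Cs m a b x i (Suc j) \<le> Cs m a b x i j"
    have 1: "real (\<Sum>k=1..i. b k) \<le> (\<Sum>k=1..i. x (k, m))"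
      using H[rule_format, of m] assms by (simp add: Cs_last Cs_mid)
    have 2: "(\<Sum>k=1..i. x (k, 1)) \<le> real (\<Sum>k=1..i. a k)"
      using H[rule_format, of 0] assms by (simp add: Cs_zero Cs_mid)
    have 3: "\<forall>j\<in>{1..<m}. (\<Sum>k=1..i. x (k, j+1)) \<le> (\<Sum>k=1..i. x (k, j))"
    proof
      fix j assume "j \<in> {1..<m}"
      then show "(\<Sum>k=1..i. x (k, j+1)) \<le> (\<Sum>k=1..i. x (k, j))"
        using H[rule_format, of j] by (simp add: Cs_mid)
    qed
    show "real (\<Sum>k=1..i. b k) \<le> (\<Sum>k=1..i. x (k, m)) \<and>
         (\<forall>j\<in>{1..<m}. (\<Sum>k=1..i. x (k, j+1)) \<le> (\<Sum>k=1..i. x (k, j))) \<and>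
         (\<Sum>k=1..i. x (k, 1)) \<le> real (\<Sum>k=1..i. a k)" using 1 2 3 by blast
  qed
  then show ?thesis unfolding PS_def by auto
qed

lemma Phi_in_Q:
  assumes "0 < m" "0 < n" "\<forall>e\<in>G_edges n m. 0 \<le> Phi n m a b x e"
  shows "Phi n m a b x \<in> flow_polytope n m a b"
proof -
  have "\<forall>v\<in>G_vertices n m.
         (\<Sum>e\<in>{e\<in>G_edges n m. fst e = v}. Phi n m a b x e) - (\<Sum>e\<in>{e\<in>G_edges n m. snd e = v}. Phi n m a b x e)
           = netflow n m a b v"
    unfolding G_vertices_def using Phi_cons_V[OF assms(1)] Phi_cons_Sink[OF assms(1,2)] by auto
  moreover have "\<forall>e. e \<notin> G_edges n m \<longrightarrow> Phi n m a b x e = 0"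
    unfolding Phi_def affine_map_on_def by auto
  ultimately show ?thesis unfolding flow_polytope_def using assms(3) by blast
qed

lemma Phi_nonneg:
  assumes "0 < m" "0 < n" "x \<in> PS n m a b"
  shows "\<forall>e\<in>G_edges n m. 0 \<le> Phi n m a b x e"
proof
  fix e assume "e \<in> G_edges n m"
  then show "0 \<le> Phi n m a b x e"
  proof (rule edge_cases[OF _ assms(2)])
    fix i j assume 1: "1 \<le> i" "i \<le> n" "Suc j \<le> m" "e = (V i j, V i (Suc j))"
    then have "(i, Suc j) \<in> PS_index n m" unfolding PS_index_def by auto
    then show ?thesis using 1 Phi_hor[of i n j m a b x] assms(3) unfolding PS_iff[OF assms(1)] by auto
  next
    fix i j assume 2: "1 \<le> i" "i \<le> n" "j \<le> m" "e = down n i j"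
    then show ?thesis using Phi_down[of i n j m a b x] assms unfolding PS_iff[OF assms(1)] by auto
  qed
qed

definition Psi :: "nat \<Rightarrow> nat \<Rightarrow> (vertex \<times> vertex \<Rightarrow> real) \<Rightarrow> nat \<times> nat \<Rightarrow> real" where
  "Psi n m f = (\<lambda>k. if k \<in> PS_index n m then f (V (fst k) (snd k - 1), V (fst k) (snd k)) else 0)"

lemma PhiPsi:
  assumes "0 < m" "0 < n" "f \<in> flow_polytope n m a b"
  shows "Phi n m a b (Psi n m f) = f"
proof -
  let ?x = "Psi n m f"
  have z: "\<forall>e. e \<notin> G_edges n m \<longrightarrow> f e = 0"
   and c: "\<forall>v\<in>G_vertices n m.
         (\<Sum>e\<in>{e\<in>G_edges n m. fst e = v}. f e) - (\<Sum>e\<in>{e\<in>G_edges n m. snd e = v}. f e)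
           = netflow n m a b v" using assms(3) unfolding flow_polytope_def by auto
  have xh: "1 \<le> i \<Longrightarrow> i \<le> n \<Longrightarrow> 1 \<le> j \<Longrightarrow> j \<le> m \<Longrightarrow> ?x (i, j) = f (V i (j-1), V i j)" for i j
    unfolding Psi_def PS_index_def by auto
  have D: "1 \<le> i \<longrightarrow> i \<le> n \<longrightarrow> (\<forall>j\<le>m. f (down n i j) = Cs m a b ?x i j - Cs m a b ?x i (Suc j))" for i
  proof (induction i)
    case 0 then show ?case by simp
  next
    case (Suc i)
    show ?case
    proof (intro impI allI)
      fix j assume i: "1 \<le> Suc i" "Suc i \<le> n" and j: "j \<le> m"
      have "V (Suc i) j \<in> G_vertices n m" unfolding G_vertices_def using i j by auto
      note cv = c[rule_format, OF this]
      have cc0: "(\<Sum>e\<in>{e\<in>G_edges n m. fst e = V (Suc i) j}. f e) - (\<Sum>e\<in>{e\<in>G_edges n m. snd e = V (Suc i) j}. f e) = (if Suc j \<le> m then f (V (Suc i) j, V (Suc i) (Suc j)) else 0) + f (down n (Suc i) j)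
         - ((if 1 \<le> j then f (V (Suc i) (j-1), V (Suc i) j) else 0) + (if 2 \<le> Suc i then f (down n i j) else 0))"
        using i j unfolding out_sum[OF i j] in_sum[OF i j] by simp
      have cc: "(if Suc j \<le> m then f (V (Suc i) j, V (Suc i) (Suc j)) else 0) + f (down n (Suc i) j)
         - ((if 1 \<le> j then f (V (Suc i) (j-1), V (Suc i) j) else 0) + (if 2 \<le> Suc i then f (down n i j) else 0))
         = netflow n m a b (V (Suc i) j)"
        using cv unfolding cc0 .
      have ih: "(if 2 \<le> Suc i then f (down n i j) else 0) = Cs m a b ?x i j - Cs m a b ?x i (Suc j)"
        using Suc.IH i j by (cases i) auto
      have e1: "ext m a b ?x (Suc i) (Suc j) = (if Suc j \<le> m then f (V (Suc i) j, V (Suc i) (Suc j)) else real (b (Suc i)))"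
        unfolding ext_def using xh[of "Suc i" "Suc j"] i j by auto
      have e2: "ext m a b ?x (Suc i) j = (if 1 \<le> j then f (V (Suc i) (j-1), V (Suc i) j) else real (a (Suc i)))"
        unfolding ext_def using xh[of "Suc i" j] i j by auto
      show "f (down n (Suc i) j) = Cs m a b ?x (Suc i) j - Cs m a b ?x (Suc i) (Suc j)"
        using cc unfolding ih Cs_Suc e1 e2 netflow_def using j assms(1) by (auto split: if_splits)
    qed
  qed
  show ?thesis
  proof
    fix e
    show "Phi n m a b ?x e = f e"
    proof (cases "e \<in> G_edges n m")
      case False then show ?thesis using z[rule_format, OF False] unfolding Phi_def affine_map_on_def by simp
    next
      case True
      then show ?thesis
      proof (rule edge_cases[OF _ assms(2)])
        fix i j assume 1: "1 \<le> i" "i \<le> n" "Suc j \<le> m" "e = (V i j, V i (Suc j))"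
        then show ?thesis using Phi_hor[of i n j m a b ?x] xh[of i "Suc j"] by auto
      next
        fix i j assume 2: "1 \<le> i" "i \<le> n" "j \<le> m" "e = down n i j"
        then show ?thesis using Phi_down[of i n j m a b ?x] D[of i] assms by auto
      qed
    qed
  qed
qed

lemma affine_map_comb:
  assumes "finite S" "sum u S = 1"
  shows "affine_map_on I J M c (\<lambda>k. \<Sum>y\<in>S. u y * h y k) = (\<lambda>j. \<Sum>y\<in>S. u y * affine_map_on I J M c (h y) j)"
proof
  fix j
  show "affine_map_on I J M c (\<lambda>k. \<Sum>y\<in>S. u y * h y k) j = (\<Sum>y\<in>S. u y * affine_map_on I J M c (h y) j)"
  proof (cases "j \<in> J")
    case True
    have "(\<Sum>i\<in>I. M j i * (\<Sum>y\<in>S. u y * h y i)) = (\<Sum>y\<in>S. u y * (\<Sum>i\<in>I. M j i * h y i))"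
      by (simp add: sum_distrib_left mult.left_commute sum.swap[of _ I])
    moreover have "c j = (\<Sum>y\<in>S. u y * c j)" using assms by (simp add: sum_distrib_right[symmetric])
    ultimately show ?thesis using True unfolding affine_map_on_def
      by (simp add: distrib_left sum.distrib)
  next
    case False then show ?thesis unfolding affine_map_on_def by simp
  qed
qed

lemma Psi_comb: "Psi n m (\<lambda>k. \<Sum>y\<in>S. u y * h y k) = (\<lambda>k. \<Sum>y\<in>S. u y * Psi n m (h y) k)"
  unfolding Psi_def by auto

lemma PsiPhi:
  assumes "\<forall>k. k \<notin> PS_index n m \<longrightarrow> x k = 0"
  shows "Psi n m (Phi n m a b x) = x"
proof
  fix k show "Psi n m (Phi n m a b x) k = x k"
  proof (cases "k \<in> PS_index n m")
    case True
    then obtain i j where k: "k = (i, j)" "1 \<le> i" "i \<le> n" "1 \<le> j" "j \<le> m" unfolding PS_index_def by auto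
    then show ?thesis using Phi_hor[of i n "j-1" m a b x] True unfolding Psi_def by simp
  next
    case False then show ?thesis using assms[rule_format, OF False] unfolding Psi_def by simp
  qed
qed

lemma Phi_int:
  assumes "x \<in> int_points (PS_index n m)"
  shows "Phi n m a b x \<in> int_points (G_edges n m)"
  unfolding int_points_def mem_Collect_eq
proof
  fix e assume "e \<in> G_edges n m"
  have "cv m a b e \<in> \<int>" unfolding cv_def by (auto intro!: Ints_diff)
  moreover have "Mm e k \<in> \<int>" for k unfolding Mm_def by auto
  ultimately show "Phi n m a b x e \<in> \<int>" using assms unfolding Phi_def affine_map_on_def int_points_def
    by (auto intro!: Ints_add Ints_sum Ints_mult)
qed

lemma Psi_int:
  assumes "f \<in> int_points (G_edges n m)"
  shows "Psi n m f \<in> int_points (PS_index n m)"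
  unfolding int_points_def mem_Collect_eq
proof
  fix k assume "k \<in> PS_index n m"
  then obtain i j where k: "k = (i, j)" "1 \<le> i" "i \<le> n" "1 \<le> j" "j \<le> m" unfolding PS_index_def by auto
  then have "(V i (j-1), V i j) \<in> G_edges n m" using hor_in[of i n "j-1" m] by simp
  then show "Psi n m f k \<in> \<int>" using assms k unfolding Psi_def int_points_def by auto
qed

lemma aff_hull_image:
  assumes inj: "inj_on F P"
    and comb: "\<And>S u. finite S \<Longrightarrow> S \<subseteq> P \<Longrightarrow> sum u S = 1 \<Longrightarrow> F (\<lambda>k. \<Sum>y\<in>S. u y * y k) = (\<lambda>k. \<Sum>y\<in>S. u y * F y k)"
    and img: "F ` P \<subseteq> Q" and x: "x \<in> aff_hull P"
  shows "F x \<in> aff_hull Q"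
proof -
  obtain S u where S: "finite S" "S \<noteq> {}" "S \<subseteq> P" "sum u S = 1" "x = (\<lambda>k. \<Sum>y\<in>S. u y * y k)"
    using x unfolding aff_hull_def by blast
  have injS: "inj_on F S" using inj S(3) by (rule inj_on_subset)
  define v where "v = (\<lambda>z. u (the_inv_into S F z))"
  have vF: "y \<in> S \<Longrightarrow> v (F y) = u y" for y unfolding v_def using the_inv_into_f_f[OF injS] by simp
  have "sum v (F ` S) = sum (v \<circ> F) S" by (rule sum.reindex[OF injS])
  also have "\<dots> = 1" using S(4) vF by (simp add: comp_def)
  finally have s1: "sum v (F ` S) = 1" .
  have "F x = (\<lambda>k. \<Sum>y\<in>S. u y * F y k)" using comb S by simp
  also have "\<dots> = (\<lambda>k. \<Sum>z\<in>F ` S. v z * z k)"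
    by (rule ext, subst sum.reindex[OF injS]) (simp add: vF)
  finally show ?thesis unfolding aff_hull_def using S img s1
    by (intro CollectI exI[of _ "F ` S"] exI[of _ v]) auto
qed

lemma aff_hull_zero:
  assumes "\<forall>x\<in>P. \<forall>k. k \<notin> I \<longrightarrow> x k = 0" "x \<in> aff_hull P" "k \<notin> I"
  shows "x k = 0"
  using assms unfolding aff_hull_def by (auto intro!: sum.neutral dest!: subsetD)

theorem theorem3p4:
  fixes n m :: nat and a b :: "nat \<Rightarrow> nat"
  assumes "0 < n" and "0 < m"
  shows "integrally_equivalent (PS_index n m) (PS n m a b)
           (G_edges n m) (flow_polytope n m a b)"
proof -
  let ?P = "PS n m a b" and ?Q = "flow_polytope n m a b" and ?I = "PS_index n m" and ?J = "G_edges n m"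
  let ?F = "Phi n m a b" and ?G = "Psi n m"
  have Pz: "\<forall>x\<in>?P. \<forall>k. k \<notin> ?I \<longrightarrow> x k = 0" using PS_iff[OF assms(2)] by blast
  have PQ: "?F x \<in> ?Q" if "x \<in> ?P" for x
    using Phi_in_Q[OF assms(2,1) Phi_nonneg[OF assms(2,1) that]] .
  have QP: "?G f \<in> ?P" if f: "f \<in> ?Q" for f
  proof -
    have fnn: "\<forall>e\<in>?J. 0 \<le> f e" using f unfolding flow_polytope_def by blast
    have ff: "?F (?G f) = f" using PhiPsi[OF assms(2,1) f] .
    have 1: "\<forall>k. k \<notin> ?I \<longrightarrow> ?G f k = 0" unfolding Psi_def by simp
    have 2: "\<forall>k\<in>?I. 0 \<le> ?G f k"
    proof
      fix k assume "k \<in> ?I"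
      then obtain i j where k: "k = (i, j)" "1 \<le> i" "i \<le> n" "1 \<le> j" "j \<le> m" unfolding PS_index_def by auto
      then have "(V i (j-1), V i j) \<in> ?J" using hor_in[of i n "j-1" m] by simp
      then show "0 \<le> ?G f k" using fnn k unfolding Psi_def by auto
    qed
    have 3: "\<forall>i\<in>{1..n}. \<forall>j\<le>m. Cs m a b (?G f) i (Suc j) \<le> Cs m a b (?G f) i j"
    proof (intro ballI allI impI)
      fix i j assume i: "i \<in> {1..n}" and j: "j \<le> m"
      have "0 \<le> f (down n i j)" using fnn down_in[of i n j m] i j by auto
      moreover have "?F (?G f) (down n i j) = Cs m a b (?G f) i j - Cs m a b (?G f) i (Suc j)"
      proof (rule Phi_down)
        show "1 \<le> i" "i \<le> n" using i by auto
      qed (use j assms in auto)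
      ultimately show "Cs m a b (?G f) i (Suc j) \<le> Cs m a b (?G f) i j"
        unfolding ff by linarith
    qed
    show ?thesis unfolding PS_iff[OF assms(2)] using 1 2 3 by (intro conjI)
  qed
  have FG: "?F (?G f) = f" if "f \<in> ?Q" for f using PhiPsi[OF assms(2,1) that] .
  have GF: "?G (?F x) = x" if "x \<in> ?P" for x using PsiPhi[of n m x a b] Pz that by blast
  have injF: "inj_on ?F ?P"
  proof (rule inj_onI)
    fix x y assume xy: "x \<in> ?P" "y \<in> ?P" "?F x = ?F y"
    then have "?G (?F x) = ?G (?F y)" by simp
    then show "x = y" using GF[OF xy(1)] GF[OF xy(2)] by simp
  qed
  have injG: "inj_on ?G ?Q"
  proof (rule inj_onI)
    fix x y assume xy: "x \<in> ?Q" "y \<in> ?Q" "?G x = ?G y"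
    then have "?F (?G x) = ?F (?G y)" by simp
    then show "x = y" using FG[OF xy(1)] FG[OF xy(2)] by simp
  qed
  have imF: "?F ` ?P = ?Q"
  proof
    show "?F ` ?P \<subseteq> ?Q" using PQ by blast
    show "?Q \<subseteq> ?F ` ?P"
    proof
      fix f assume f: "f \<in> ?Q"
      show "f \<in> ?F ` ?P" using QP[OF f] FG[OF f] by (metis image_eqI)
    qed
  qed
  have bij1: "bij_betw ?F ?P ?Q" unfolding bij_betw_def using injF imF by blast
  have combF: "\<And>S u h. finite S \<Longrightarrow> sum u S = 1 \<Longrightarrow> ?F (\<lambda>k. \<Sum>y\<in>S. u y * h y k) = (\<lambda>j. \<Sum>y\<in>S. u y * ?F (h y) j)"
    unfolding Phi_def by (rule affine_map_comb)
  have affF: "?F x \<in> aff_hull ?Q" if "x \<in> aff_hull ?P" for x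
  proof (rule aff_hull_image[OF injF _ _ that])
    show "\<And>S u. finite S \<Longrightarrow> S \<subseteq> ?P \<Longrightarrow> sum u S = 1 \<Longrightarrow> ?F (\<lambda>k. \<Sum>y\<in>S. u y * y k) = (\<lambda>k. \<Sum>y\<in>S. u y * ?F y k)"
      using combF[where h="\<lambda>y. y"] by simp
    show "?F ` ?P \<subseteq> ?Q" using imF by simp
  qed
  have affG: "?G f \<in> aff_hull ?P" if "f \<in> aff_hull ?Q" for f
  proof (rule aff_hull_image[OF injG _ _ that])
    show "\<And>S u. finite S \<Longrightarrow> S \<subseteq> ?Q \<Longrightarrow> sum u S = 1 \<Longrightarrow> ?G (\<lambda>k. \<Sum>y\<in>S. u y * y k) = (\<lambda>k. \<Sum>y\<in>S. u y * ?G y k)"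
      using Psi_comb[where h="\<lambda>y. y"] by simp
    show "?G ` ?Q \<subseteq> ?P" using QP by auto
  qed
  have FGaff: "?F (?G f) = f" if "f \<in> aff_hull ?Q" for f
  proof -
    have "\<exists>S u. finite S \<and> S \<noteq> {} \<and> S \<subseteq> ?Q \<and> sum u S = 1 \<and> f = (\<lambda>k. \<Sum>y\<in>S. u y * y k)"
      using that unfolding aff_hull_def mem_Collect_eq .
    then obtain S u where SS: "finite S \<and> S \<noteq> {} \<and> S \<subseteq> ?Q \<and> sum u S = 1 \<and> f = (\<lambda>k. \<Sum>y\<in>S. u y * y k)"
      by (elim exE) (rule that)
    note S = conjunct1[OF SS] conjunct1[OF conjunct2[OF SS]] conjunct1[OF conjunct2[OF conjunct2[OF SS]]]
      conjunct1[OF conjunct2[OF conjunct2[OF conjunct2[OF SS]]]] conjunct2[OF conjunct2[OF conjunct2[OF conjunct2[OF SS]]]]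
    have "?G f = (\<lambda>k. \<Sum>y\<in>S. u y * ?G y k)" unfolding S(5) by (rule Psi_comb)
    then have "?F (?G f) = ?F (\<lambda>k. \<Sum>y\<in>S. u y * ?G y k)" by (rule arg_cong)
    also have "\<dots> = (\<lambda>j. \<Sum>y\<in>S. u y * ?F (?G y) j)" by (rule combF[OF S(1) S(4)])
    also have "\<dots> = (\<lambda>j. \<Sum>y\<in>S. u y * y j)"
    proof (intro ext sum.cong refl)
      fix j y assume "y \<in> S"
      then have "y \<in> ?Q" using S(3) by blast
      then have "?F (?G y) = y" by (rule FG)
      then show "u y * ?F (?G y) j = u y * y j" by simp
    qed
    also have "\<dots> = f" using S(5) by simp
    finally show ?thesis .
  qed
  have GFaff: "?G (?F x) = x" if "x \<in> aff_hull ?P" for x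
  proof -
    have "\<forall>k. k \<notin> ?I \<longrightarrow> x k = 0" using aff_hull_zero[OF Pz that] by blast
    then show ?thesis by (rule PsiPhi)
  qed
  have bij2: "bij_betw ?F (aff_hull ?P \<inter> int_points ?I) (aff_hull ?Q \<inter> int_points ?J)"
    unfolding bij_betw_def
  proof
    show "inj_on ?F (aff_hull ?P \<inter> int_points ?I)"
    proof (rule inj_onI)
      fix x y assume xy: "x \<in> aff_hull ?P \<inter> int_points ?I" "y \<in> aff_hull ?P \<inter> int_points ?I" "?F x = ?F y"
      then have "?G (?F x) = ?G (?F y)" by simp
      then show "x = y" using GFaff[of x] GFaff[of y] xy(1,2) by simp
    qed
    show "?F ` (aff_hull ?P \<inter> int_points ?I) = aff_hull ?Q \<inter> int_points ?J"
    proof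
      show "?F ` (aff_hull ?P \<inter> int_points ?I) \<subseteq> aff_hull ?Q \<inter> int_points ?J"
      proof
        fix f assume "f \<in> ?F ` (aff_hull ?P \<inter> int_points ?I)"
        then obtain x where "x \<in> aff_hull ?P" "x \<in> int_points ?I" "f = ?F x" by blast
        then show "f \<in> aff_hull ?Q \<inter> int_points ?J" using affF Phi_int by simp
      qed
      show "aff_hull ?Q \<inter> int_points ?J \<subseteq> ?F ` (aff_hull ?P \<inter> int_points ?I)"
      proof
        fix f assume f: "f \<in> aff_hull ?Q \<inter> int_points ?J"
        then have "?G f \<in> aff_hull ?P \<inter> int_points ?I" using affG Psi_int by simp
        moreover have "f = ?F (?G f)" using FGaff f by simp
        ultimately show "f \<in> ?F ` (aff_hull ?P \<inter> int_points ?I)" by blast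
      qed
    qed
  qed
  show ?thesis unfolding integrally_equivalent_def
    using bij1 bij2 unfolding Phi_def by (intro exI[of _ Mm] exI[of _ "cv m a b"] conjI)
qed

end
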